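(* Let $r,\beta_0,a,\mu>0$ with $\beta_0<1$, and consider the family of systems $$\dot S = S(A-S)-\beta_0 IS,\qquad \dot I=\beta_0 IS-\mu I-\frac{rI}{a+I}$$ with bifurcation parameter $A>0$ (equivalently $\mathcal{R}_0=\beta_0A/(\mu+r/a)$). At the parameter value where $\mathcal{R}_0=\phi_0:=1-\dfrac{(a\beta_0-\sqrt r)^2}{a\mu+r}$, the system undergoes a saddle-node bifurcation (of endemic equilibria).
   Context: $\mu$ denotes the total death rate of infectious individuals. Endemic equilibria are zeros of the vector field with $I\ne0$. A saddle-node bifurcation is the generic codimension-one bifurcation in which two equilibria (here a sink and a saddle) coalesce into a single equilibrium with a zero eigenvalue and disappear as the parameter crosses the critical value. *)

theory Defs
  imports "HOL-Analysis.Analysis"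
begin

definition sis_field :: "real \<Rightarrow> real \<Rightarrow> real \<Rightarrow> real \<Rightarrow> real \<Rightarrow> real \<times> real \<Rightarrow> real \<times> real" where
  "sis_field r b a mu A = (\<lambda>(S, I). (S * (A - S) - b * I * S, b * I * S - mu * I - r * I / (a + I)))"

definition R0 :: "real \<Rightarrow> real \<Rightarrow> real \<Rightarrow> real \<Rightarrow> real \<Rightarrow> real" where
  "R0 r b a mu A = b * A / (mu + r / a)"

definition endemic_eq :: "real \<Rightarrow> real \<Rightarrow> real \<Rightarrow> real \<Rightarrow> real \<Rightarrow> real \<times> real \<Rightarrow> bool" where
  "endemic_eq r b a mu A x \<longleftrightarrow> sis_field r b a mu A x = (0, 0) \<and> snd x \<noteq> 0 \<and> a + snd x \<noteq> 0"

definition lin_det :: "(real \<times> real \<Rightarrow> real \<times> real) \<Rightarrow> real" where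
  "lin_det L = fst (L (1, 0)) * snd (L (0, 1)) - fst (L (0, 1)) * snd (L (1, 0))"

definition lin_trace :: "(real \<times> real \<Rightarrow> real \<times> real) \<Rightarrow> real" where
  "lin_trace L = fst (L (1, 0)) + snd (L (0, 1))"

text \<open>Hyperbolic sink: both Jacobian eigenvalues have negative real part.\<close>
definition is_sink :: "(real \<times> real \<Rightarrow> real \<times> real) \<Rightarrow> real \<times> real \<Rightarrow> bool" where
  "is_sink F x \<longleftrightarrow> (\<exists>L. (F has_derivative L) (at x) \<and> lin_det L > 0 \<and> lin_trace L < 0)"

text \<open>Saddle: Jacobian eigenvalues real of opposite signs.\<close>
definition is_saddle :: "(real \<times> real \<Rightarrow> real \<times> real) \<Rightarrow> real \<times> real \<Rightarrow> bool" where
  "is_saddle F x \<longleftrightarrow> (\<exists>L. (F has_derivative L) (at x) \<and> lin_det L < 0)"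

definition has_zero_eigenvalue :: "(real \<times> real \<Rightarrow> real \<times> real) \<Rightarrow> real \<times> real \<Rightarrow> bool" where
  "has_zero_eigenvalue F x \<longleftrightarrow> (\<exists>L. (F has_derivative L) (at x) \<and> lin_det L = 0)"

definition saddle_node ::
  "(real \<Rightarrow> real \<times> real \<Rightarrow> real \<times> real) \<Rightarrow> (real \<Rightarrow> real \<times> real \<Rightarrow> bool) \<Rightarrow> real \<Rightarrow> bool" where
  "saddle_node F Eq p0 \<longleftrightarrow>
     (\<exists>x0 \<delta> \<epsilon> \<sigma> e1 e2. \<delta> > 0 \<and> \<epsilon> > 0 \<and> \<sigma> \<in> {-1, 1::real} \<and>
        Eq p0 x0 \<and> has_zero_eigenvalue (F p0) x0 \<and>
        {x \<in> ball x0 \<delta>. Eq p0 x} = {x0} \<and>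
        (\<forall>p. 0 < \<sigma> * (p - p0) \<and> \<sigma> * (p - p0) < \<epsilon> \<longrightarrow>
             {x \<in> ball x0 \<delta>. Eq p x} = {e1 p, e2 p} \<and> e1 p \<noteq> e2 p \<and>
             is_sink (F p) (e1 p) \<and> is_saddle (F p) (e2 p)) \<and>
        (e1 \<longlongrightarrow> x0) (at p0 within {p. 0 < \<sigma> * (p - p0)}) \<and>
        (e2 \<longlongrightarrow> x0) (at p0 within {p. 0 < \<sigma> * (p - p0)}) \<and>
        (\<forall>p. 0 < \<sigma> * (p0 - p) \<and> \<sigma> * (p0 - p) < \<epsilon> \<longrightarrow> {x \<in> ball x0 \<delta>. Eq p x} = {}))"

end

theory Submission
  imports Defs
begin

lemma field_deriv:
  assumes "a + I \<noteq> 0"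
  shows "(sis_field r b a mu A has_derivative
     (\<lambda>(h,k). ((A - 2*S - b*I)*h - b*S*k, b*I*h + (b*S - mu - r*a/(a+I)^2)*k))) (at (S,I))"
proof -
  have e: "sis_field r b a mu A = (\<lambda>x. (fst x * (A - fst x) - b * snd x * fst x,
      b * snd x * fst x - mu * snd x - r * snd x / (a + snd x)))"
    by (simp add: sis_field_def split_def)
  show ?thesis unfolding e
    apply (rule has_derivative_eq_rhs)
     apply (rule derivative_eq_intros | simp add: assms)+
    apply (simp add: fun_eq_iff split_def)
    apply (intro conjI allI)
     apply (simp add: algebra_simps)
    using assms apply (simp add: inverse_eq_divide divide_simps)
    apply (simp add: algebra_simps power2_eq_square)
    done
qed

lemma eq_point:
  assumes "J \<noteq> 0" "b^2*J^2 - (b*A - mu + a*b^2)*J + r = 0"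
  shows "sis_field r b a mu A (A - b*(J-a), J - a) = (0,0)"
proof -
  have "b*(J-a)*(A - b*(J-a)) - mu*(J-a) - r*(J-a)/(a+(J-a)) = (J-a)*((b^2*J^2 - (b*A - mu + a*b^2)*J + r)/(-J))"
    using assms(1) by (simp add: field_simps power2_eq_square)
  also have "\<dots> = 0" using assms(2) by simp
  finally show ?thesis unfolding sis_field_def by (simp add: algebra_simps)
qed

lemma pt_det:
  assumes "J \<noteq> 0" "b^2*J^2 - (b*A - mu + a*b^2)*J + r = 0"
  shows "\<exists>L. (sis_field r b a mu A has_derivative L) (at (A - b*(J-a), J - a)) \<and>
     lin_det L = (A - b*(J-a))*(J-a)*(b^2*J^2 - r)/J^2 \<and>
     lin_trace L = -(A - b*(J-a)) + r*(J-a)/J^2"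
proof -
  let ?S = "A - b*(J-a)" and ?I = "J - a"
  have aI: "a + ?I = J" by simp
  have key: "b*?S - mu = r/J"
    using assms by (simp add: field_simps power2_eq_square)
  have L22: "b*?S - mu - r*a/(a+?I)^2 = r*?I/J^2"
    unfolding aI key using assms(1) by (simp add: field_simps power2_eq_square)
  show ?thesis
    apply (rule exI, rule conjI, rule field_deriv)
    using assms(1) apply simp
    unfolding lin_det_def lin_trace_def
    apply (simp only: prod.case fst_conv snd_conv L22)
    using assms(1) apply (simp add: field_simps power2_eq_square)
    done
qed

lemma eq_char:
  assumes "endemic_eq r b a mu A (S, I)" "S \<noteq> 0"
  shows "S = A - b*I \<and> b^2*(a+I)^2 - (b*A - mu + a*b^2)*(a+I) + r = 0 \<and> a + I \<noteq> 0 \<and> I \<noteq> 0"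
proof -
  from assms(1) have f1: "S * (A - S) - b * I * S = 0" and f2: "b * I * S - mu * I - r * I / (a + I) = 0"
    and I: "I \<noteq> 0" and J: "a + I \<noteq> 0"
    unfolding endemic_eq_def sis_field_def by auto
  have "S * (A - S - b*I) = 0" using f1 by (simp add: algebra_simps)
  hence S: "S = A - b*I" using assms(2) by simp
  have "I * (b*S - mu - r/(a+I)) = 0" using f2 by (simp add: algebra_simps)
  hence "b*S - mu - r/(a+I) = 0" using I by simp
  hence "(b*S - mu)*(a+I) - r = 0" using J by (simp add: field_simps)
  hence "b^2*(a+I)^2 - (b*A - mu + a*b^2)*(a+I) + r = 0"
    unfolding S by (simp add: algebra_simps power2_eq_square)
  thus ?thesis using S I J by simp
qed

lemma roots:
  fixes b w r J :: real
  assumes "b > 0"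
  shows "b^2*J^2 - w*J + r = 0 \<longleftrightarrow> w^2 - 4*b^2*r \<ge> 0 \<and>
    (J = (w + sqrt (w^2 - 4*b^2*r))/(2*b^2) \<or> J = (w - sqrt (w^2 - 4*b^2*r))/(2*b^2))"
proof -
  let ?D = "w^2 - 4*b^2*r"
  have id: "(2*b^2*J - w)^2 - ?D = (4*b^2)*(b^2*J^2 - w*J + r)"
    by (simp add: algebra_simps power2_eq_square)
  have e: "b^2*J^2 - w*J + r = 0 \<longleftrightarrow> (2*b^2*J - w)^2 = ?D"
  proof -
    have "(2*b^2*J - w)^2 = ?D \<longleftrightarrow> (4*b^2)*(b^2*J^2 - w*J + r) = 0" using id by linarith
    thus ?thesis using assms by simp
  qed
  show ?thesis
  proof
    assume "b^2*J^2 - w*J + r = 0"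
    hence h: "(2*b^2*J - w)^2 = ?D" using e by simp
    hence D: "?D \<ge> 0" by (metis zero_le_power2)
    have "sqrt ?D = \<bar>2*b^2*J - w\<bar>" using h by (metis real_sqrt_abs)
    hence "2*b^2*J - w = sqrt ?D \<or> 2*b^2*J - w = - sqrt ?D" by linarith
    thus "?D \<ge> 0 \<and> (J = (w + sqrt ?D)/(2*b^2) \<or> J = (w - sqrt ?D)/(2*b^2))"
      using D assms by (auto simp: field_simps)
  next
    assume h: "?D \<ge> 0 \<and> (J = (w + sqrt ?D)/(2*b^2) \<or> J = (w - sqrt ?D)/(2*b^2))"
    hence "2*b^2*J - w = sqrt ?D \<or> 2*b^2*J - w = - sqrt ?D" using assms by (auto simp: field_simps)
    hence "(2*b^2*J - w)^2 = ?D" using h by auto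
    thus "b^2*J^2 - w*J + r = 0" using e by simp
  qed
qed

lemma root_signs:
  fixes b sr Wv dv :: real
  assumes "b > 0" "sr > 0" "Wv > 2*b* sr" "dv \<ge> 0" "dv^2 = Wv^2 - 4*b^2* sr^2"
  shows "b^2*((Wv+dv)/(2*b^2))^2 > sr^2" "0 < (Wv-dv)/(2*b^2)" "b^2*((Wv-dv)/(2*b^2))^2 < sr^2" "dv > 0"
proof -
  have e: "b^2*(X/(2*b^2))^2 = (X/(2*b))^2" for X using assms(1) by (simp add: field_simps power2_eq_square)
  have p: "2*b * sr > 0" "4*b^2 * sr^2 > 0" using assms by simp_all
  have "Wv > 0" using assms p by linarith
  have "dv^2 < Wv^2" using assms p by linarith
  hence dW: "dv < Wv" using \<open>Wv > 0\<close> by (simp add: power_less_imp_less_base)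
  have m: "4*b * sr*(2*b * sr) < 4*b * sr*Wv" by (rule mult_strict_left_mono) (use assms in simp_all)
  have "(Wv - 2*b * sr)^2 < dv^2" using m unfolding assms(5) by (simp add: power2_eq_square algebra_simps)
  hence d2: "Wv - 2*b * sr < dv" using assms(4) by (simp add: power_less_imp_less_base)
  show "dv > 0" using d2 assms by linarith
  have "(Wv+dv)/(2*b) > sr" using assms by (simp add: field_simps)
  thus "b^2*((Wv+dv)/(2*b^2))^2 > sr^2" unfolding e using assms by (simp add: power_strict_mono)
  show "0 < (Wv-dv)/(2*b^2)" using dW assms by simp
  have "(Wv-dv)/(2*b) < sr" "(Wv-dv)/(2*b) > 0" using assms d2 dW by (simp_all add: field_simps)
  thus "b^2*((Wv-dv)/(2*b^2))^2 < sr^2" unfolding e using assms by (simp add: power_strict_mono)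
qed

lemma sign_neg:
  fixes x y z J :: real
  assumes "x > 0" "y < 0" "z > 0" "J \<noteq> 0"
  shows "x*y*z/J^2 < 0"
proof -
  have "x*y < 0" using assms by (simp add: mult_pos_neg)
  hence "x*y*z < 0" using assms(3) by (simp add: mult_neg_pos)
  thus ?thesis using assms(4) by (simp add: divide_neg_pos)
qed

theorem lemma5p3:
  fixes r b a mu A0 :: real
  assumes "r > 0" and "b > 0" and "a > 0" and "mu > 0" and "b < 1"
    and "A0 > 0"
    and "R0 r b a mu A0 = 1 - (a * b - sqrt r)^2 / (a * mu + r)"
    and "sqrt r \<noteq> a * b"
  shows "saddle_node (sis_field r b a mu) (endemic_eq r b a mu) A0"
proof -
  define q where "q = sqrt r"
  have q: "q > 0" "q^2 = r" using assms(1) by (simp_all add: q_def)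
  define w where "w = (\<lambda>p. b*p - mu + a*b^2)"
  define D where "D = (\<lambda>p. (w p)^2 - 4*b^2*r)"
  define Jp where "Jp = (\<lambda>p. (w p + sqrt (D p))/(2*b^2))"
  define Jm where "Jm = (\<lambda>p. (w p - sqrt (D p))/(2*b^2))"
  define pt :: "real \<Rightarrow> real \<Rightarrow> real \<times> real" where "pt = (\<lambda>J p. (p - b*(J-a), J - a))"
  define J0 where "J0 = q/b"
  define I0 where "I0 = J0 - a"
  define S0 where "S0 = A0 - b*I0"
  define x0 where "x0 = pt J0 A0"
  have x0: "x0 = (S0, I0)" by (simp add: x0_def pt_def S0_def I0_def)
  have amr: "a*mu + r > 0" using assms by (simp add: add_pos_pos)
  have hw0: "w A0 = 2*b*q"
  proof -
    have "b*A0/(mu + r/a) = a*b*A0/(a*mu+r)" using assms(3) by (simp add: field_simps)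
    hence "a*b*A0/(a*mu+r) = 1 - (a * b - q)^2 / (a * mu + r)" using assms(7) by (simp add: R0_def q_def)
    hence "a*b*A0 = (a*mu + r) - (a * b - q)^2" using amr by (simp add: field_simps)
    also have "\<dots> = a*(mu - a*b^2 + 2*b*q)" using q(2) by (simp add: power2_eq_square algebra_simps)
    finally have "b*A0 = mu - a*b^2 + 2*b*q" using assms(3) by simp
    thus ?thesis by (simp add: w_def)
  qed
  have hD0: "D A0 = 0" unfolding D_def hw0 using q(2) by (simp add: power2_eq_square algebra_simps)
  have hJ0: "Jp A0 = J0" "Jm A0 = J0" unfolding Jp_def Jm_def hD0 hw0 J0_def using assms(2)
    by (simp_all add: power2_eq_square field_simps)
  have J0pos: "J0 > 0" using q assms(2) by (simp add: J0_def)
  have bI0: "b*I0 = q - a*b" unfolding I0_def J0_def using assms(2) by (simp add: field_simps)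
  have I0ne: "I0 \<noteq> 0" using assms(8) bI0 assms(2) unfolding q_def by (auto simp: algebra_simps)
  have bS0: "b*S0 = mu + b*q"
  proof -
    have "b*S0 = b*A0 - b*(b*I0)" by (simp add: S0_def algebra_simps)
    also have "\<dots> = b*A0 - b*(q - a*b)" using bI0 by simp
    finally show ?thesis using hw0 by (simp add: w_def algebra_simps power2_eq_square)
  qed
  have S0pos: "S0 > 0" using bS0 assms(2,4) q(1)
    by (metis add_pos_pos mult_pos_pos zero_less_mult_pos)
  have bJ0: "b^2*J0^2 = r" unfolding J0_def using q assms(2) by (simp add: field_simps)
  have quadJ: "\<And>p J. b^2*J^2 - w p*J + r = 0 \<longleftrightarrow> D p \<ge> 0 \<and> (J = Jp p \<or> J = Jm p)"
    using roots[OF assms(2)] unfolding D_def Jp_def Jm_def by simp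
  define \<delta> where "\<delta> = min S0 (min \<bar>I0\<bar> J0)"
  have dpos: "\<delta> > 0" using S0pos I0ne J0pos by (simp add: \<delta>_def)
  have ballf: "fst x > 0 \<and> a + snd x > 0 \<and> (I0 > 0 \<longrightarrow> snd x > 0) \<and> (I0 < 0 \<longrightarrow> snd x < 0)"
    if "x \<in> ball x0 \<delta>" for x
  proof -
    have "dist (fst x0) (fst x) < \<delta>" "dist (snd x0) (snd x) < \<delta>"
      using that dist_fst_le[of x0 x] dist_snd_le[of x0 x] by auto
    hence "\<bar>S0 - fst x\<bar> < \<delta>" "\<bar>I0 - snd x\<bar> < \<delta>" by (simp_all add: x0 dist_real_def)
    thus ?thesis unfolding \<delta>_def I0_def by auto
  qed
  have eqball: "D p \<ge> 0 \<and> (x = pt (Jp p) p \<or> x = pt (Jm p) p)"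
    if "x \<in> ball x0 \<delta>" "endemic_eq r b a mu p x" for p x
  proof -
    obtain S I where x: "x = (S, I)" by fastforce
    have "S \<noteq> 0" using ballf[OF that(1)] x by simp
    from eq_char[OF that(2)[unfolded x] this]
    have h: "S = p - b*I" "b^2*(a+I)^2 - w p*(a+I) + r = 0" by (simp_all add: w_def)
    from h(2) quadJ have "D p \<ge> 0 \<and> (a + I = Jp p \<or> a + I = Jm p)" by blast
    moreover have "x = pt (a+I) p" using h(1) x by (simp add: pt_def)
    ultimately show ?thesis by auto
  qed
  have eqpt: "endemic_eq r b a mu p (pt J p)"
    if "pt J p \<in> ball x0 \<delta>" "J = Jp p \<or> J = Jm p" "D p \<ge> 0" for p J
  proof -
    have bf: "J > 0" "J - a \<noteq> 0" using ballf[OF that(1)] I0ne by (auto simp: pt_def)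
    have "b^2*J^2 - w p*J + r = 0" using quadJ that(2,3) by blast
    hence "sis_field r b a mu p (pt J p) = (0,0)" unfolding pt_def
      using eq_point[of J b p mu a r] bf by (simp add: w_def)
    thus ?thesis using bf by (simp add: endemic_eq_def pt_def)
  qed
  have detpt: "\<exists>L. (sis_field r b a mu p has_derivative L) (at (pt J p)) \<and>
     lin_det L = fst (pt J p) * snd (pt J p) * (b^2*J^2 - r)/J^2 \<and>
     lin_trace L = - fst (pt J p) + r * snd (pt J p)/J^2"
    if "J \<noteq> 0" "J = Jp p \<or> J = Jm p" "D p \<ge> 0" for p J
  proof -
    have "b^2*J^2 - w p*J + r = 0" using quadJ that(2,3) by blast
    thus ?thesis using pt_det[of J b p mu a r] that(1) by (simp add: pt_def w_def)
  qed
  have cJp: "(Jp \<longlongrightarrow> J0) (at A0)"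
  proof -
    have "isCont Jp A0" unfolding Jp_def D_def w_def using assms(2) by (intro continuous_intros) simp
    thus ?thesis using hJ0 by (simp add: isCont_def)
  qed
  have cJm: "(Jm \<longlongrightarrow> J0) (at A0)"
  proof -
    have "isCont Jm A0" unfolding Jm_def D_def w_def using assms(2) by (intro continuous_intros) simp
    thus ?thesis using hJ0 by (simp add: isCont_def)
  qed
  have cpt: "((\<lambda>p. pt (J p) p) \<longlongrightarrow> x0) (at A0)" if "(J \<longlongrightarrow> J0) (at A0)" for J
    unfolding pt_def x0_def by (intro tendsto_intros that)
  define J1 where "J1 = (if I0 > 0 then Jp else Jm)"
  define J2 where "J2 = (if I0 > 0 then Jm else Jp)"
  have cJ1: "(J1 \<longlongrightarrow> J0) (at A0)" using cJp cJm by (simp add: J1_def)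
  have cJ2: "(J2 \<longlongrightarrow> J0) (at A0)" using cJp cJm by (simp add: J2_def)
  define T where "T = (\<lambda>p. - fst (pt (J1 p) p) + r * snd (pt (J1 p) p)/(J1 p)^2)"
  have cT: "(T \<longlongrightarrow> - S0 + r*I0/J0^2) (at A0)"
  proof -
    have Teq: "T = (\<lambda>p. -(p - b*(J1 p - a)) + r*(J1 p - a)/(J1 p)^2)" by (simp add: T_def pt_def)
    show ?thesis unfolding Teq S0_def I0_def using J0pos
      by (intro tendsto_intros cJ1) auto
  qed
  have T0: "- S0 + r*I0/J0^2 < 0"
  proof -
    have "r/J0^2 = b^2" using bJ0 J0pos by (simp add: field_simps)
    hence "r*I0/J0^2 = b*(b*I0)" by (metis times_divide_eq_left mult.commute power2_eq_square mult.assoc)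
    hence "b*(- S0 + r*I0/J0^2) = -(b*S0) + (b*b)*(b*I0)" by (simp add: algebra_simps)
    also have "\<dots> = -(mu + b*q) + (b*b)*(q - a*b)" using bS0 bI0 by simp
    also have "\<dots> = -mu - b*q*(1-b) - a*b^3" by (simp add: algebra_simps power3_eq_cube)
    also have "\<dots> < 0"
    proof -
      have "b*q*(1-b) > 0" "a*b^3 > 0" using assms(2,3,5) q(1) by simp_all
      thus ?thesis using assms(4) by linarith
    qed
    finally show ?thesis using assms(2) by (simp add: mult_less_0_iff)
  qed
  have ev: "eventually (\<lambda>p. pt (Jp p) p \<in> ball x0 \<delta> \<and> pt (Jm p) p \<in> ball x0 \<delta> \<and> T p < 0) (at A0)"
  proof (intro eventually_conj)
    show "eventually (\<lambda>p. pt (Jp p) p \<in> ball x0 \<delta>) (at A0)"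
      using tendstoD[OF cpt[OF cJp] dpos] by (simp add: dist_commute)
    show "eventually (\<lambda>p. pt (Jm p) p \<in> ball x0 \<delta>) (at A0)"
      using tendstoD[OF cpt[OF cJm] dpos] by (simp add: dist_commute)
    show "eventually (\<lambda>p. T p < 0) (at A0)" using order_tendstoD(2)[OF cT T0] .
  qed
  then obtain d where d: "d > 0" and dP: "\<And>p. p \<noteq> A0 \<Longrightarrow> dist p A0 < d \<Longrightarrow>
      pt (Jp p) p \<in> ball x0 \<delta> \<and> pt (Jm p) p \<in> ball x0 \<delta> \<and> T p < 0"
    unfolding eventually_at by auto
  define \<epsilon> where "\<epsilon> = min d (2*q)"
  have epos: "\<epsilon> > 0" using d q by (simp add: \<epsilon>_def)
  have wlin: "w p = 2*b*q + b*(p - A0)" for p using hw0 by (simp add: w_def algebra_simps)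
  have right: "{x \<in> ball x0 \<delta>. endemic_eq r b a mu p x} = {pt (J1 p) p, pt (J2 p) p} \<and>
      pt (J1 p) p \<noteq> pt (J2 p) p \<and> is_sink (sis_field r b a mu p) (pt (J1 p) p) \<and>
      is_saddle (sis_field r b a mu p) (pt (J2 p) p)"
    if "0 < 1 * (p - A0)" "1 * (p - A0) < \<epsilon>" for p
  proof -
    have P: "pt (Jp p) p \<in> ball x0 \<delta>" "pt (Jm p) p \<in> ball x0 \<delta>" "T p < 0"
      using dP[of p] that by (auto simp: \<epsilon>_def dist_real_def)
    have wp: "w p > 2*b*q" using wlin[of p] that assms(2) by simp
    have Dp: "D p > 0"
    proof -
      have "0 < 2*b*q" using assms(2) q(1) by simp
      hence "(2*b*q)^2 < (w p)^2" using wp by (simp add: power_strict_mono)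
      thus ?thesis using q(2) by (simp add: D_def power_mult_distrib)
    qed
    have sq: "(sqrt (D p))^2 = (w p)^2 - 4*b^2*q^2" using Dp q(2) by (simp add: D_def)
    note rs = root_signs[OF assms(2) q(1) wp _ sq, folded Jp_def Jm_def]
    have rs1: "b^2*(Jp p)^2 - r > 0" "b^2*(Jm p)^2 - r < 0" "Jm p > 0" "Jp p \<noteq> Jm p"
      using rs q(2) assms(2) Dp by (auto simp: Jp_def Jm_def)
    have Jpp: "Jp p > 0" using ballf[OF P(1)] by (simp add: pt_def)
    have ne: "pt (Jp p) p \<noteq> pt (Jm p) p" using rs1(4) by (simp add: pt_def)
    have seteq: "{x \<in> ball x0 \<delta>. endemic_eq r b a mu p x} = {pt (Jp p) p, pt (Jm p) p}"
    proof -
      have "endemic_eq r b a mu p (pt (Jp p) p)" "endemic_eq r b a mu p (pt (Jm p) p)"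
        using eqpt P Dp by auto
      thus ?thesis using eqball[of _ p] P by auto
    qed
    obtain Lp where Lp: "(sis_field r b a mu p has_derivative Lp) (at (pt (Jp p) p))"
      "lin_det Lp = fst (pt (Jp p) p) * snd (pt (Jp p) p) * (b^2*(Jp p)^2 - r)/(Jp p)^2"
      "lin_trace Lp = - fst (pt (Jp p) p) + r * snd (pt (Jp p) p)/(Jp p)^2"
      using detpt[of "Jp p" p] Jpp Dp by auto
    obtain Lm where Lm: "(sis_field r b a mu p has_derivative Lm) (at (pt (Jm p) p))"
      "lin_det Lm = fst (pt (Jm p) p) * snd (pt (Jm p) p) * (b^2*(Jm p)^2 - r)/(Jm p)^2"
      "lin_trace Lm = - fst (pt (Jm p) p) + r * snd (pt (Jm p) p)/(Jm p)^2"
      using detpt[of "Jm p" p] rs1(3) Dp by auto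
    have bp: "fst (pt (Jp p) p) > 0" "I0 > 0 \<longrightarrow> snd (pt (Jp p) p) > 0" "I0 < 0 \<longrightarrow> snd (pt (Jp p) p) < 0"
      using ballf[OF P(1)] by auto
    have bm: "fst (pt (Jm p) p) > 0" "I0 > 0 \<longrightarrow> snd (pt (Jm p) p) > 0" "I0 < 0 \<longrightarrow> snd (pt (Jm p) p) < 0"
      using ballf[OF P(2)] by auto
    show ?thesis
    proof (cases "I0 > 0")
      case True
      have "lin_det Lp > 0" unfolding Lp(2) using bp True rs1(1) Jpp by simp
      moreover have "lin_trace Lp < 0" using P(3) True unfolding Lp(3) T_def J1_def by simp
      moreover have "lin_det Lm < 0" unfolding Lm(2) using bm True rs1(2,3)
        by (simp add: mult_pos_neg divide_neg_pos)
      ultimately show ?thesis using Lp(1) Lm(1) True seteq ne unfolding is_sink_def is_saddle_def J1_def J2_def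
        by auto
    next
      case False
      hence F: "I0 < 0" using I0ne by simp
      have "lin_det Lm > 0" unfolding Lm(2) using bm F rs1(2,3)
        by (simp add: mult_pos_neg mult_neg_neg)
      moreover have "lin_trace Lm < 0" using P(3) False unfolding Lm(3) T_def J1_def by simp
      moreover have "lin_det Lp < 0" unfolding Lp(2)
        by (rule sign_neg) (use bp F rs1(1) Jpp in auto)
      ultimately show ?thesis using Lp(1) Lm(1) False seteq ne unfolding is_sink_def is_saddle_def J1_def J2_def
        by auto
    qed
  qed
  have left: "{x \<in> ball x0 \<delta>. endemic_eq r b a mu p x} = {}"
    if "0 < 1 * (A0 - p)" "1 * (A0 - p) < \<epsilon>" for p
  proof -
    have "b*(A0 - p) < b*(2*q)" using that assms(2) by (simp add: \<epsilon>_def)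
    moreover have "b*p < b*A0" using that assms(2) by simp
    ultimately have w1: "w p > 0" "w p < 2*b*q" using wlin[of p] by (simp_all add: algebra_simps)
    hence "(w p)^2 < (2*b*q)^2" by (simp add: power_strict_mono)
    hence "D p < 0" using q(2) by (simp add: D_def power_mult_distrib)
    thus ?thesis using eqball[of _ p] by force
  qed
  have at0: "{x \<in> ball x0 \<delta>. endemic_eq r b a mu A0 x} = {x0}"
  proof -
    have "x0 \<in> ball x0 \<delta>" using dpos by simp
    hence "endemic_eq r b a mu A0 x0" using eqpt[of J0 A0] hJ0 hD0 by (simp add: x0_def)
    thus ?thesis using eqball[of _ A0] hJ0 dpos by (auto simp: x0_def)
  qed
  have zero: "has_zero_eigenvalue (sis_field r b a mu A0) x0"
  proof -
    obtain L where "(sis_field r b a mu A0 has_derivative L) (at (pt J0 A0))"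
      "lin_det L = fst (pt J0 A0) * snd (pt J0 A0) * (b^2*J0^2 - r)/J0^2"
      using detpt[of J0 A0] J0pos hJ0 hD0 by auto
    thus ?thesis using bJ0 unfolding has_zero_eigenvalue_def x0_def by auto
  qed
  have lim1: "((\<lambda>p. pt (J1 p) p) \<longlongrightarrow> x0) (at A0 within {p. 0 < 1 * (p - A0)})"
    by (rule tendsto_within_subset[OF cpt[OF cJ1]]) simp
  have lim2: "((\<lambda>p. pt (J2 p) p) \<longlongrightarrow> x0) (at A0 within {p. 0 < 1 * (p - A0)})"
    by (rule tendsto_within_subset[OF cpt[OF cJ2]]) simp
  show ?thesis unfolding saddle_node_def
    apply (rule exI[of _ x0], rule exI[of _ \<delta>], rule exI[of _ \<epsilon>], rule exI[of _ 1],
        rule exI[of _ "\<lambda>p. pt (J1 p) p"], rule exI[of _ "\<lambda>p. pt (J2 p) p"])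
    using dpos epos at0 zero right left lim1 lim2 by auto
qed

end
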